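(* Let $G_1$ and $G_2$ be connected graphs, where $G_1$ has at least two vertices. Then $$\chi_d^t(G_1\star G_2)\leq |V(G_1)|+|V(G_2)|.$$
   Context: All graphs are simple and finite. A total dominator coloring (TD-coloring) of a graph $G$ with no isolated vertex is a proper vertex coloring of $G$ in which every vertex of $G$ is adjacent to every vertex of some color class (a color class being the set of all vertices receiving a given color). The total dominator chromatic number (TDC-number) $\chi_d^t(G)$ is the minimum number of colors in a TD-coloring of $G$. The neighbourhood corona $G_1\star G_2$ of graphs $G_1$ and $G_2$ is the graph obtained by taking one copy of $G_1$ and $|V(G_1)|$ copies of $G_2$, and, for each $i$, joining every neighbour (in $G_1$) of the $i$-th vertex of $G_1$ to every vertex of the $i$-th copy of $G_2$. *)

theory Defs
  imports Main
begin

definition simple_graph :: "'a set \<Rightarrow> ('a \<Rightarrow> 'a \<Rightarrow> bool) \<Rightarrow> bool" where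
  "simple_graph V E \<longleftrightarrow> finite V \<and> (\<forall>u v. E u v \<longrightarrow> u \<in> V \<and> v \<in> V) \<and>
     (\<forall>u v. E u v \<longrightarrow> E v u) \<and> (\<forall>v. \<not> E v v)"

definition connected_graph :: "'a set \<Rightarrow> ('a \<Rightarrow> 'a \<Rightarrow> bool) \<Rightarrow> bool" where
  "connected_graph V E \<longleftrightarrow> simple_graph V E \<and> V \<noteq> {} \<and>
     (\<forall>u\<in>V. \<forall>v\<in>V. (\<lambda>x y. x \<in> V \<and> y \<in> V \<and> E x y)\<^sup>*\<^sup>* u v)"

definition td_coloring :: "'a set \<Rightarrow> ('a \<Rightarrow> 'a \<Rightarrow> bool) \<Rightarrow> ('a \<Rightarrow> nat) \<Rightarrow> bool" where
  "td_coloring V E c \<longleftrightarrow>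
     (\<forall>u\<in>V. \<forall>v\<in>V. E u v \<longrightarrow> c u \<noteq> c v) \<and>
     (\<forall>v\<in>V. \<exists>j\<in>c ` V. \<forall>u\<in>V. c u = j \<longrightarrow> E v u)"

definition tdc_number :: "'a set \<Rightarrow> ('a \<Rightarrow> 'a \<Rightarrow> bool) \<Rightarrow> nat" where
  "tdc_number V E = (LEAST k. \<exists>c. td_coloring V E c \<and> card (c ` V) = k)"

text \<open>Neighbourhood corona G1 \<star> G2: vertices Inl v (v in G1) and Inr (i, w)
(vertex w of the copy of G2 attached to vertex i of G1).\<close>
definition nc_vertices :: "'a set \<Rightarrow> 'b set \<Rightarrow> ('a + 'a \<times> 'b) set" where
  "nc_vertices V1 V2 = Inl ` V1 \<union> Inr ` (V1 \<times> V2)"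

fun nc_edges :: "('a \<Rightarrow> 'a \<Rightarrow> bool) \<Rightarrow> ('b \<Rightarrow> 'b \<Rightarrow> bool) \<Rightarrow>
    ('a + 'a \<times> 'b) \<Rightarrow> ('a + 'a \<times> 'b) \<Rightarrow> bool" where
  "nc_edges E1 E2 (Inl u) (Inl v) = E1 u v"
| "nc_edges E1 E2 (Inr (i, w)) (Inr (j, w')) = (i = j \<and> E2 w w')"
| "nc_edges E1 E2 (Inl u) (Inr (i, w)) = E1 u i"
| "nc_edges E1 E2 (Inr (i, w)) (Inl u) = E1 u i"

end

theory Submission
  imports Defs
begin

lemma has_nbr:
  assumes "connected_graph V E" "card V \<ge> 2" "v \<in> V"
  shows "\<exists>u\<in>V. E v u"
proof -
  have fin: "finite V" using assms(1) by (simp add: connected_graph_def simple_graph_def)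
  have "\<exists>x\<in>V. x \<noteq> v"
  proof (rule ccontr)
    assume "\<not> ?thesis"
    then have "V \<subseteq> {v}" by blast
    then have "card V \<le> card {v}" using card_mono[of "{v}" V] by simp
    then have "card V \<le> 1" by simp
    then show False using assms(2) by simp
  qed
  then obtain x where x: "x \<in> V" "x \<noteq> v" by blast
  then have "(\<lambda>x y. x \<in> V \<and> y \<in> V \<and> E x y)\<^sup>*\<^sup>* v x"
    using assms(1,3) by (simp add: connected_graph_def)
  then show ?thesis using x(2)
    by (cases rule: converse_rtranclpE) auto
qed

theorem theorem1:
  fixes V1 :: "'a set" and E1 :: "'a \<Rightarrow> 'a \<Rightarrow> bool"
    and V2 :: "'b set" and E2 :: "'b \<Rightarrow> 'b \<Rightarrow> bool"
  assumes "connected_graph V1 E1" and "connected_graph V2 E2"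
    and "card V1 \<ge> 2"
  shows "tdc_number (nc_vertices V1 V2) (nc_edges E1 E2) \<le> card V1 + card V2"
proof -
  have f1: "finite V1" using assms(1) by (simp add: connected_graph_def simple_graph_def)
  have f2: "finite V2" using assms(2) by (simp add: connected_graph_def simple_graph_def)
  have irr: "\<And>v. \<not> E2 v v" using assms(2) unfolding connected_graph_def simple_graph_def by blast
  have irr1: "\<And>v. \<not> E1 v v" using assms(1) unfolding connected_graph_def simple_graph_def by blast
  have sym1: "\<And>u v. E1 u v \<Longrightarrow> E1 v u" using assms(1) unfolding connected_graph_def simple_graph_def by blast
  obtain f where f: "bij_betw f V1 {0..<card V1}" using ex_bij_betw_finite_nat[OF f1] by blast
  obtain g where g: "bij_betw g V2 {0..<card V2}" using ex_bij_betw_finite_nat[OF f2] by blast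
  define c :: "'a + 'a \<times> 'b \<Rightarrow> nat" where "c = (\<lambda>x. case x of Inl v \<Rightarrow> f v | Inr (i, w) \<Rightarrow> card V1 + g w)"
  let ?V = "nc_vertices V1 V2"
  have cInl: "c (Inl v) = f v" for v by (simp add: c_def)
  have cInr: "c (Inr (i, w)) = card V1 + g w" for i w by (simp add: c_def)
  have fin: "\<And>v. v \<in> V1 \<Longrightarrow> f v < card V1" using f by (auto simp: bij_betw_def)
  have gin: "\<And>v. v \<in> V2 \<Longrightarrow> g v < card V2" using g by (auto simp: bij_betw_def)
  have finj: "inj_on f V1" using f by (simp add: bij_betw_def)
  have ginj: "inj_on g V2" using g by (simp add: bij_betw_def)
  have td: "td_coloring ?V (nc_edges E1 E2) c"
    unfolding td_coloring_def
  proof (intro conjI ballI impI)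
    fix u v assume u: "u \<in> ?V" and v: "v \<in> ?V" and e: "nc_edges E1 E2 u v"
    show "c u \<noteq> c v"
    proof (cases u)
      case (Inl a)
      then have a: "a \<in> V1" using u by (auto simp: nc_vertices_def)
      show ?thesis
      proof (cases v)
        case (Inl b)
        then have b: "b \<in> V1" using v by (auto simp: nc_vertices_def)
        have "a \<noteq> b" using e Inl \<open>u = Inl a\<close> irr1 by auto
        then show ?thesis using Inl \<open>u = Inl a\<close> cInl finj a b by (auto dest: inj_onD)
      next
        case (Inr p) then obtain i w where "v = Inr (i,w)" by (cases p) auto
        then show ?thesis using \<open>u = Inl a\<close> cInl cInr fin[OF a] by auto
      qed
    next
      case (Inr p) then obtain i w where uu: "u = Inr (i,w)" by (cases p) auto
      then have w: "w \<in> V2" using u by (auto simp: nc_vertices_def)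
      show ?thesis
      proof (cases v)
        case (Inl b)
        then have b: "b \<in> V1" using v by (auto simp: nc_vertices_def)
        then show ?thesis using Inl uu cInl cInr fin[OF b] by auto
      next
        case (Inr q) then obtain j w' where vv: "v = Inr (j,w')" by (cases q) auto
        then have w': "w' \<in> V2" using v by (auto simp: nc_vertices_def)
        have "w \<noteq> w'" using e uu vv irr by auto
        then show ?thesis using uu vv cInr ginj w w' by (auto dest: inj_onD)
      qed
    qed
  next
    fix v assume v: "v \<in> ?V"
    have "\<exists>u\<in>V1. nc_edges E1 E2 v (Inl u)"
    proof (cases v)
      case (Inl a)
      then have a: "a \<in> V1" using v by (auto simp: nc_vertices_def)
      then show ?thesis using has_nbr[OF assms(1,3) a] Inl by auto
    next
      case (Inr p) then obtain i w where uu: "v = Inr (i,w)" by (cases p) auto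
      then have a: "i \<in> V1" using v by (auto simp: nc_vertices_def)
      obtain u where "u \<in> V1" "E1 i u" using has_nbr[OF assms(1,3) a] by auto
      moreover have "E1 u i" using \<open>E1 i u\<close> sym1 by blast
      ultimately show ?thesis using uu by auto
    qed
    then obtain u where u: "u \<in> V1" "nc_edges E1 E2 v (Inl u)" by blast
    have uV: "Inl u \<in> ?V" using u by (simp add: nc_vertices_def)
    show "\<exists>j\<in>c ` ?V. \<forall>x\<in>?V. c x = j \<longrightarrow> nc_edges E1 E2 v x"
    proof (rule bexI[of _ "c (Inl u)"])
      show "c (Inl u) \<in> c ` ?V" using uV by blast
      show "\<forall>x\<in>?V. c x = c (Inl u) \<longrightarrow> nc_edges E1 E2 v x"
      proof (intro ballI impI)
        fix x assume x: "x \<in> ?V" "c x = c (Inl u)"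
        show "nc_edges E1 E2 v x"
        proof (cases x)
          case (Inl b)
          then have b: "b \<in> V1" using x by (auto simp: nc_vertices_def)
          then have "b = u" using x Inl cInl finj u by (auto dest: inj_onD)
          then show ?thesis using Inl u by simp
        next
          case (Inr p) then obtain i w where "x = Inr (i,w)" by (cases p) auto
          then show ?thesis using x cInl cInr fin[OF u(1)] by auto
        qed
      qed
    qed
  qed
  have sub: "c ` ?V \<subseteq> {0..<card V1 + card V2}"
    using fin gin by (force simp: nc_vertices_def cInl cInr intro: trans_less_add1)
  have "card (c ` ?V) \<le> card V1 + card V2"
    using card_mono[OF _ sub] by simp
  moreover have "tdc_number ?V (nc_edges E1 E2) \<le> card (c ` ?V)"
    unfolding tdc_number_def by (rule Least_le) (use td in blast)
  ultimately show ?thesis by linarith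
qed

end
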